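(* Let $A,B,C$ be non-degenerate square $\{0,1\}$-matrices and let $\varphi_1:X_A\to X_B$, $\varphi_2:X_B\to X_C$, $\varphi_3:X_A\to X_C$ be elementary conjugacies. Set $R_i=R_{\varphi_i}$, $S_i=S_{\varphi_i}$ for $i=1,2,3$. Then $\varphi_2\circ\varphi_1=\varphi_3$ if and only if $R_1R_2=R_3$, $R_2S_3=S_1$ and $S_3R_1=S_2$.
   Context: Non-degenerate: no zero rows or columns; products are integer matrix products. $X_A=\{x\in\{1,\dots,m\}^{\mathbb Z}:A_{x_\ell,x_{\ell+1}}=1\ \forall\ell\}$ with the left shift; a conjugacy is a shift-commuting homeomorphism. A conjugacy $\varphi:X_A\to X_B$ is elementary if there are $\varphi_{\mathrm{loc}}$ (on pairs $(a,a')$ with $A_{a,a'}=1$) and $\varphi^{-1}_{\mathrm{loc}}$ (on pairs $(b,b')$ with $B_{b,b'}=1$) with $\varphi(x)_i=\varphi_{\mathrm{loc}}(x_i,x_{i+1})$ and $\varphi^{-1}(y)_i=\varphi^{-1}_{\mathrm{loc}}(y_{i-1},y_i)$. For such $\varphi$, $R_\varphi$ is the $\{0,1\}$-matrix with $(R_\varphi)_{a,b}=1$ iff $\varphi_{\mathrm{loc}}(a,a')=b$ for some allowed $a'$, and $S_\varphi$ is the $\{0,1\}$-matrix with $(S_\varphi)_{b,a}=1$ iff $\varphi^{-1}_{\mathrm{loc}}(b,b')=a$ for some allowed $b'$. *)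

theory Defs
  imports "HOL-Analysis.Analysis" "Jordan_Normal_Form.Matrix"
begin

definition zero_one_mat :: "int mat \<Rightarrow> bool" where
  "zero_one_mat A \<longleftrightarrow> (\<forall>i<dim_row A. \<forall>j<dim_col A. A $$ (i,j) \<in> {0,1})"

definition nondegenerate :: "int mat \<Rightarrow> bool" where
  "nondegenerate A \<longleftrightarrow>
     (\<forall>i<dim_row A. \<exists>j<dim_col A. A $$ (i,j) \<noteq> 0) \<and>
     (\<forall>j<dim_col A. \<exists>i<dim_row A. A $$ (i,j) \<noteq> 0)"

definition square_01_nondeg :: "int mat \<Rightarrow> bool" where
  "square_01_nondeg A \<longleftrightarrow> dim_row A = dim_col A \<and> zero_one_mat A \<and> nondegenerate A"

definition shift_space :: "int mat \<Rightarrow> (int \<Rightarrow> nat) set" where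
  "shift_space A = {x. \<forall>l. x l < dim_row A \<and> x (l+1) < dim_row A \<and> A $$ (x l, x (l+1)) = 1}"

definition shift :: "(int \<Rightarrow> nat) \<Rightarrow> (int \<Rightarrow> nat)" where
  "shift x = (\<lambda>i. x (i+1))"

definition seq_top :: "(int \<Rightarrow> nat) topology" where
  "seq_top = product_topology (\<lambda>_. discrete_topology UNIV) UNIV"

definition shift_top :: "int mat \<Rightarrow> (int \<Rightarrow> nat) topology" where
  "shift_top A = subtopology seq_top (shift_space A)"

definition conjugacy :: "int mat \<Rightarrow> int mat \<Rightarrow> ((int \<Rightarrow> nat) \<Rightarrow> (int \<Rightarrow> nat)) \<Rightarrow> bool" where
  "conjugacy A B \<phi> \<longleftrightarrow> homeomorphic_map (shift_top A) (shift_top B) \<phi> \<and>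
     (\<forall>x\<in>shift_space A. \<phi> (shift x) = shift (\<phi> x))"

definition elementary_rules ::
  "int mat \<Rightarrow> int mat \<Rightarrow> ((int \<Rightarrow> nat) \<Rightarrow> (int \<Rightarrow> nat)) \<Rightarrow> (nat \<Rightarrow> nat \<Rightarrow> nat) \<Rightarrow> (nat \<Rightarrow> nat \<Rightarrow> nat) \<Rightarrow> bool" where
  "elementary_rules A B \<phi> f g \<longleftrightarrow> conjugacy A B \<phi> \<and>
     (\<forall>x\<in>shift_space A. \<forall>i. \<phi> x i = f (x i) (x (i+1))) \<and>
     (\<forall>y\<in>shift_space B. \<forall>i. the_inv_into (shift_space A) \<phi> y i = g (y (i-1)) (y i))"

definition elementary_conjugacy :: "int mat \<Rightarrow> int mat \<Rightarrow> ((int \<Rightarrow> nat) \<Rightarrow> (int \<Rightarrow> nat)) \<Rightarrow> bool" where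
  "elementary_conjugacy A B \<phi> \<longleftrightarrow> (\<exists>f g. elementary_rules A B \<phi> f g)"

definition loc_rule where
  "loc_rule A B \<phi> = (SOME f. \<exists>g. elementary_rules A B \<phi> f g)"

definition inv_loc_rule where
  "inv_loc_rule A B \<phi> = (SOME g. \<exists>f. elementary_rules A B \<phi> f g)"

definition R_mat :: "int mat \<Rightarrow> int mat \<Rightarrow> ((int \<Rightarrow> nat) \<Rightarrow> (int \<Rightarrow> nat)) \<Rightarrow> int mat" where
  "R_mat A B \<phi> = mat (dim_row A) (dim_row B) (\<lambda>(a,b).
     if \<exists>a'<dim_row A. A $$ (a,a') = 1 \<and> loc_rule A B \<phi> a a' = b then 1 else 0)"

definition S_mat :: "int mat \<Rightarrow> int mat \<Rightarrow> ((int \<Rightarrow> nat) \<Rightarrow> (int \<Rightarrow> nat)) \<Rightarrow> int mat" where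
  "S_mat A B \<phi> = mat (dim_row B) (dim_row A) (\<lambda>(b,a).
     if \<exists>b'<dim_row B. B $$ (b,b') = 1 \<and> inv_loc_rule A B \<phi> b b' = a then 1 else 0)"

end

theory Submission
  imports Defs
begin


definition glue :: "int \<Rightarrow> (int \<Rightarrow> nat) \<Rightarrow> (int \<Rightarrow> nat) \<Rightarrow> (int \<Rightarrow> nat)" where
  "glue k x x' = (\<lambda>i. if i \<le> k then x i else x' i)"

lemma glue_in:
  assumes "x \<in> shift_space A" "x' \<in> shift_space A" "x k = x' k"
  shows "glue k x x' \<in> shift_space A"
  using assms unfolding shift_space_def glue_def
  apply auto
  apply (subgoal_tac "l = k")
  apply auto
  done

lemma glue_le[simp]: "i \<le> k \<Longrightarrow> glue k x x' i = x i"
  by (simp add: glue_def)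
lemma glue_gt[simp]: "k < i \<Longrightarrow> glue k x x' i = x' i"
  by (simp add: glue_def)

lemma topspace_shift_top[simp]: "topspace (shift_top A) = shift_space A"
  by (simp add: shift_top_def seq_top_def)

lemma path_exists:
  assumes "square_01_nondeg A" "a < dim_row A" "a' < dim_row A" "A $$ (a,a') = 1"
  shows "\<exists>x\<in>shift_space A. x k = a \<and> x (k+1) = a'"
proof -
  let ?n = "dim_row A"
  have nx: "\<exists>j<?n. A $$ (i,j) = 1" if "i < ?n" for i
  proof -
    from assms(1) that obtain j where "j < ?n" "A $$ (i,j) \<noteq> 0"
      unfolding square_01_nondeg_def nondegenerate_def by metis
    moreover have "A $$ (i,j) \<in> {0,1}" using assms(1) that \<open>j < ?n\<close>
      unfolding square_01_nondeg_def zero_one_mat_def by metis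
    ultimately show ?thesis by auto
  qed
  have pv: "\<exists>j<?n. A $$ (j,i) = 1" if "i < ?n" for i
  proof -
    from assms(1) that obtain j where "j < ?n" "A $$ (j,i) \<noteq> 0"
      unfolding square_01_nondeg_def nondegenerate_def by metis
    moreover have "A $$ (j,i) \<in> {0,1}" using assms(1) that \<open>j < ?n\<close>
      unfolding square_01_nondeg_def zero_one_mat_def by metis
    ultimately show ?thesis by auto
  qed
  define nxt where "nxt i = (SOME j. j < ?n \<and> A $$ (i,j) = 1)" for i
  define prv where "prv i = (SOME j. j < ?n \<and> A $$ (j,i) = 1)" for i
  have nxt: "nxt i < ?n \<and> A $$ (i, nxt i) = 1" if "i < ?n" for i
    unfolding nxt_def using someI_ex[OF nx[OF that]] by blast
  have prv: "prv i < ?n \<and> A $$ (prv i, i) = 1" if "i < ?n" for i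
    unfolding prv_def using someI_ex[OF pv[OF that]] by blast
  have nxtn: "(nxt ^^ m) a' < ?n" for m
    by (induction m) (auto simp: assms nxt)
  have prvn: "(prv ^^ m) a < ?n" for m
    by (induction m) (auto simp: assms prv)
  define x where "x i = (if k + 1 \<le> i then (nxt ^^ nat (i - k - 1)) a' else (prv ^^ nat (k - i)) a)" for i
  have xn: "x i < ?n" for i unfolding x_def using nxtn prvn by auto
  have xe: "A $$ (x l, x (l+1)) = 1" for l
  proof (cases "k + 1 \<le> l")
    case True
    then have "nat (l + 1 - k - 1) = Suc (nat (l - k - 1))" by auto
    then show ?thesis using True nxt[OF nxtn] unfolding x_def by auto
  next
    case False
    show ?thesis
    proof (cases "l = k")
      case True
      then show ?thesis unfolding x_def using assms by auto
    next
      case False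
      with \<open>\<not> k + 1 \<le> l\<close> have "nat (k - l) = Suc (nat (k - (l+1)))" by auto
      then show ?thesis using False \<open>\<not> k + 1 \<le> l\<close> prv[OF prvn] unfolding x_def by auto
    qed
  qed
  have "x \<in> shift_space A" unfolding shift_space_def using xn xe by auto
  moreover have "x k = a" "x (k+1) = a'" unfolding x_def by auto
  ultimately show ?thesis by blast
qed



locale elem =
  fixes A B :: "int mat" and \<phi> :: "(int \<Rightarrow> nat) \<Rightarrow> (int \<Rightarrow> nat)"
  assumes sqA: "square_01_nondeg A" and sqB: "square_01_nondeg B"
    and ec: "elementary_conjugacy A B \<phi>"
begin

definition "psi = the_inv_into (shift_space A) \<phi>"

lemma rules: "elementary_rules A B \<phi> (loc_rule A B \<phi>) (inv_loc_rule A B \<phi>)"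
proof -
  have e: "\<exists>f g. elementary_rules A B \<phi> f g" using ec by (simp add: elementary_conjugacy_def)
  have 1: "\<exists>g. elementary_rules A B \<phi> (loc_rule A B \<phi>) g"
    unfolding loc_rule_def by (rule someI_ex[OF e])
  have e2: "\<exists>g f. elementary_rules A B \<phi> f g" using e by blast
  have 2: "\<exists>f. elementary_rules A B \<phi> f (inv_loc_rule A B \<phi>)"
    unfolding inv_loc_rule_def by (rule someI_ex[OF e2])
  show ?thesis using 1 2 unfolding elementary_rules_def by blast
qed

lemma bij: "bij_betw \<phi> (shift_space A) (shift_space B)"
proof -
  have h: "homeomorphic_map (shift_top A) (shift_top B) \<phi>"
    using rules by (simp add: elementary_rules_def conjugacy_def)
  show ?thesis using homeomorphic_imp_surjective_map[OF h] homeomorphic_imp_injective_map[OF h]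
    by (simp add: bij_betw_def)
qed

lemma phi_in: "x \<in> shift_space A \<Longrightarrow> \<phi> x \<in> shift_space B"
  using bij by (simp add: bij_betw_def image_iff) (metis image_eqI)
lemma psi_in: "y \<in> shift_space B \<Longrightarrow> psi y \<in> shift_space A"
  using bij unfolding psi_def by (metis bij_betw_def the_inv_into_into order_refl)
lemma psi_phi: "x \<in> shift_space A \<Longrightarrow> psi (\<phi> x) = x"
  using bij unfolding psi_def by (simp add: bij_betw_def the_inv_into_f_f)
lemma phi_psi: "y \<in> shift_space B \<Longrightarrow> \<phi> (psi y) = y"
  using bij unfolding psi_def by (metis bij_betw_def f_the_inv_into_f)

lemma phi_loc: "x \<in> shift_space A \<Longrightarrow> \<phi> x i = loc_rule A B \<phi> (x i) (x (i+1))"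
  using rules by (simp add: elementary_rules_def)
lemma psi_loc: "y \<in> shift_space B \<Longrightarrow> psi y (i+1) = inv_loc_rule A B \<phi> (y i) (y (i+1))"
  using rules unfolding elementary_rules_def psi_def by (metis add_diff_cancel_right')

lemma phi_local: "x \<in> shift_space A \<Longrightarrow> x' \<in> shift_space A \<Longrightarrow> x i = x' i \<Longrightarrow> x (i+1) = x' (i+1)
   \<Longrightarrow> \<phi> x i = \<phi> x' i"
  by (simp add: phi_loc)
lemma psi_local: "y \<in> shift_space B \<Longrightarrow> y' \<in> shift_space B \<Longrightarrow> y i = y' i \<Longrightarrow> y (i+1) = y' (i+1)
   \<Longrightarrow> psi y (i+1) = psi y' (i+1)"
  by (simp add: psi_loc)

lemma in_range: "x \<in> shift_space A \<Longrightarrow> x i < dim_row A"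
  by (simp add: shift_space_def)
lemma edge: "x \<in> shift_space A \<Longrightarrow> A $$ (x i, x (i+1)) = 1"
  by (simp add: shift_space_def)
lemma in_rangeB: "y \<in> shift_space B \<Longrightarrow> y i < dim_row B"
  by (simp add: shift_space_def)
lemma edgeB: "y \<in> shift_space B \<Longrightarrow> B $$ (y i, y (i+1)) = 1"
  by (simp add: shift_space_def)

lemma R_dims: "dim_row (R_mat A B \<phi>) = dim_row A" "dim_col (R_mat A B \<phi>) = dim_row B"
  by (simp_all add: R_mat_def)
lemma S_dims: "dim_row (S_mat A B \<phi>) = dim_row B" "dim_col (S_mat A B \<phi>) = dim_row A"
  by (simp_all add: S_mat_def)

lemma R_01: "a < dim_row A \<Longrightarrow> b < dim_row B \<Longrightarrow> R_mat A B \<phi> $$ (a,b) = 0 \<or> R_mat A B \<phi> $$ (a,b) = 1"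
  by (simp add: R_mat_def)
lemma S_01: "a < dim_row A \<Longrightarrow> b < dim_row B \<Longrightarrow> S_mat A B \<phi> $$ (b,a) = 0 \<or> S_mat A B \<phi> $$ (b,a) = 1"
  by (simp add: S_mat_def)

lemma R_01': "\<forall>a<dim_row A. \<forall>b<dim_row B. R_mat A B \<phi> $$ (a,b) = 0 \<or> R_mat A B \<phi> $$ (a,b) = 1"
  by (simp add: R_mat_def)
lemma S_01': "\<forall>b<dim_row B. \<forall>a<dim_row A. S_mat A B \<phi> $$ (b,a) = 0 \<or> S_mat A B \<phi> $$ (b,a) = 1"
  by (simp add: S_mat_def)

lemma R_iff:
  assumes "a < dim_row A" "b < dim_row B"
  shows "R_mat A B \<phi> $$ (a,b) = 1 \<longleftrightarrow> (\<exists>x\<in>shift_space A. x k = a \<and> \<phi> x k = b)"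
proof
  assume "R_mat A B \<phi> $$ (a,b) = 1"
  then obtain a' where a': "a' < dim_row A" "A $$ (a,a') = 1" "loc_rule A B \<phi> a a' = b"
    using assms by (auto simp: R_mat_def split: if_splits)
  obtain x where x: "x \<in> shift_space A" "x k = a" "x (k+1) = a'"
    using path_exists[OF sqA assms(1) a'(1,2)] by blast
  show "\<exists>x\<in>shift_space A. x k = a \<and> \<phi> x k = b"
    using x a' phi_loc[OF x(1), of k] by auto
next
  assume "\<exists>x\<in>shift_space A. x k = a \<and> \<phi> x k = b"
  then obtain x where x: "x \<in> shift_space A" "x k = a" "\<phi> x k = b" by blast
  show "R_mat A B \<phi> $$ (a,b) = 1"
    using assms x phi_loc[OF x(1), of k] in_range[OF x(1), of "k+1"] edge[OF x(1), of k]
    by (auto simp: R_mat_def)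
qed

lemma S_iff:
  assumes "a < dim_row A" "b < dim_row B"
  shows "S_mat A B \<phi> $$ (b,a) = 1 \<longleftrightarrow> (\<exists>x\<in>shift_space A. \<phi> x k = b \<and> x (k+1) = a)"
proof
  assume "S_mat A B \<phi> $$ (b,a) = 1"
  then obtain b' where b': "b' < dim_row B" "B $$ (b,b') = 1" "inv_loc_rule A B \<phi> b b' = a"
    using assms by (auto simp: S_mat_def split: if_splits)
  obtain y where y: "y \<in> shift_space B" "y k = b" "y (k+1) = b'"
    using path_exists[OF sqB assms(2) b'(1,2)] by blast
  show "\<exists>x\<in>shift_space A. \<phi> x k = b \<and> x (k+1) = a"
    using y b' psi_loc[OF y(1), of k] psi_in[OF y(1)] phi_psi[OF y(1)]
    by (intro bexI[of _ "psi y"]) auto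
next
  assume "\<exists>x\<in>shift_space A. \<phi> x k = b \<and> x (k+1) = a"
  then obtain x where x: "x \<in> shift_space A" "\<phi> x k = b" "x (k+1) = a" by blast
  have y: "\<phi> x \<in> shift_space B" using phi_in[OF x(1)] .
  show "S_mat A B \<phi> $$ (b,a) = 1"
    using assms x psi_loc[OF y, of k] psi_phi[OF x(1)] in_rangeB[OF y, of "k+1"] edgeB[OF y, of k]
    by (auto simp: S_mat_def)
qed

lemma Z:
  assumes x: "x \<in> shift_space A" "\<phi> x k = b" "x k = a"
    and x': "x' \<in> shift_space A" "\<phi> x' k = b" "x' (k+1) = a'"
  shows "\<exists>v\<in>shift_space A. v k = a \<and> v (k+1) = a' \<and> \<phi> v k = b"
proof -
  let ?u = "glue k (\<phi> x) (\<phi> x')"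
  have u: "?u \<in> shift_space B" using glue_in[OF phi_in[OF x(1)] phi_in[OF x'(1)]] x x' by simp
  have "psi ?u k = psi (\<phi> x) k"
    using psi_local[OF u phi_in[OF x(1)], of "k-1"] by simp
  also have "\<dots> = a" using psi_phi[OF x(1)] x by simp
  finally have 1: "psi ?u k = a" .
  have "psi ?u (k+1) = psi (\<phi> x') (k+1)"
    using psi_local[OF u phi_in[OF x'(1)], of k] x x' by simp
  also have "\<dots> = a'" using psi_phi[OF x'(1)] x' by simp
  finally have 2: "psi ?u (k+1) = a'" .
  have 3: "\<phi> (psi ?u) k = b" using phi_psi[OF u] x by simp
  show ?thesis using psi_in[OF u] 1 2 3 by blast
qed

end


lemma sum01:
  fixes t :: "nat \<Rightarrow> int" and c :: int
  assumes t01: "\<forall>j<m. t j = 0 \<or> t j = 1" and c01: "c = 0 \<or> c = 1"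
  shows "(c = (\<Sum>j = 0..<m. t j)) \<longleftrightarrow>
     ((c = 1 \<longleftrightarrow> (\<exists>j<m. t j = 1)) \<and> (\<forall>j<m. \<forall>j'<m. t j = 1 \<and> t j' = 1 \<longrightarrow> j = j'))"
proof (cases "\<forall>j<m. \<forall>j'<m. t j = 1 \<and> t j' = 1 \<longrightarrow> j = j'")
  case True
  have s: "(\<Sum>j = 0..<m. t j) = (if \<exists>j<m. t j = 1 then 1 else 0)"
  proof (cases "\<exists>j<m. t j = 1")
    case True
    then obtain j0 where j0: "j0 < m" "t j0 = 1" by blast
    have "(\<Sum>j = 0..<m. t j) = t j0 + (\<Sum>j \<in> {0..<m} - {j0}. t j)"
      using j0 by (simp add: sum.remove)
    also have "(\<Sum>j \<in> {0..<m} - {j0}. t j) = 0"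
    proof (rule sum.neutral, rule ballI)
      fix j assume "j \<in> {0..<m} - {j0}"
      then have "j < m" "j \<noteq> j0" by auto
      then show "t j = 0" using \<open>\<forall>j<m. \<forall>j'<m. t j = 1 \<and> t j' = 1 \<longrightarrow> j = j'\<close> j0 t01 by blast
    qed
    finally show ?thesis using True j0 by simp
  next
    case False
    have "(\<Sum>j = 0..<m. t j) = 0"
    proof (rule sum.neutral, rule ballI)
      fix j assume "j \<in> {0..<m}"
      then show "t j = 0" using False t01 by auto
    qed
    then show ?thesis using False by simp
  qed
  show ?thesis
  proof (cases "\<exists>j<m. t j = 1")
    case True
    then show ?thesis using \<open>\<forall>j<m. \<forall>j'<m. t j = 1 \<and> t j' = 1 \<longrightarrow> j = j'\<close> s c01 by simp
  next
    case False
    then show ?thesis using \<open>\<forall>j<m. \<forall>j'<m. t j = 1 \<and> t j' = 1 \<longrightarrow> j = j'\<close> s c01 by auto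
  qed
next
  case False
  then obtain j j' where jj: "j < m" "j' < m" "t j = 1" "t j' = 1" "j \<noteq> j'" by blast
  have "(\<Sum>i\<in>{j,j'}. t i) \<le> (\<Sum>i = 0..<m. t i)"
  proof (rule sum_mono2)
    show "finite {0..<m}" by simp
    show "{j, j'} \<subseteq> {0..<m}" using jj by auto
    show "0 \<le> t b" if "b \<in> {0..<m} - {j, j'}" for b
    proof -
      from that
      have "b < m" by auto
      then show "0 \<le> t b" using t01 by (metis order_refl zero_less_one_class.zero_le_one)
    qed
  qed
  then have "(\<Sum>i = 0..<m. t i) \<ge> 2" using jj by simp
  then have "c \<noteq> (\<Sum>i = 0..<m. t i)" using c01 by auto
  then show ?thesis using False by simp
qed

lemma mult_char:
  fixes P Q M :: "int mat"
  assumes d: "dim_row P = n" "dim_col P = m" "dim_row Q = m" "dim_col Q = p" "dim_row M = n" "dim_col M = p"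
    and P01': "\<forall>i<n. \<forall>j<m. P$$(i,j) = 0 \<or> P$$(i,j) = 1"
    and Q01': "\<forall>i<m. \<forall>j<p. Q$$(i,j) = 0 \<or> Q$$(i,j) = 1"
    and M01': "\<forall>i<n. \<forall>j<p. M$$(i,j) = 0 \<or> M$$(i,j) = 1"
  shows "P * Q = M \<longleftrightarrow> (\<forall>i<n. \<forall>k<p. (M$$(i,k) = 1 \<longleftrightarrow> (\<exists>j<m. P$$(i,j)=1 \<and> Q$$(j,k)=1)) \<and>
     (\<forall>j<m. \<forall>j'<m. P$$(i,j)=1 \<and> Q$$(j,k)=1 \<and> P$$(i,j')=1 \<and> Q$$(j',k)=1 \<longrightarrow> j=j'))"
proof -
  have P01: "P$$(i,j) = 0 \<or> P$$(i,j) = 1" if "i<n" "j<m" for i j using P01' that by blast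
  have Q01: "Q$$(i,j) = 0 \<or> Q$$(i,j) = 1" if "i<m" "j<p" for i j using Q01' that by blast
  have M01: "M$$(i,j) = 0 \<or> M$$(i,j) = 1" if "i<n" "j<p" for i j using M01' that by blast
  have e: "(P * Q) $$ (i,k) = (\<Sum>j = 0..<m. P$$(i,j) * Q$$(j,k))" if "i < n" "k < p" for i k
    using that d by (simp add: scalar_prod_def)
  have eq: "P * Q = M \<longleftrightarrow> (\<forall>i<n. \<forall>k<p. M$$(i,k) = (\<Sum>j = 0..<m. P$$(i,j) * Q$$(j,k)))"
  proof
    assume h: "P * Q = M" 
    show "\<forall>i<n. \<forall>k<p. M$$(i,k) = (\<Sum>j = 0..<m. P$$(i,j) * Q$$(j,k))"
    proof (intro allI impI)
      fix i k assume "i < n" "k < p"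
      then show "M$$(i,k) = (\<Sum>j = 0..<m. P$$(i,j) * Q$$(j,k))" using e[of i k] h by simp
    qed
  next
    assume h: "\<forall>i<n. \<forall>k<p. M$$(i,k) = (\<Sum>j = 0..<m. P$$(i,j) * Q$$(j,k))"
    show "P * Q = M"
    proof (rule eq_matI)
      fix i k assume "i < dim_row M" "k < dim_col M"
      then show "(P * Q) $$ (i,k) = M $$ (i,k)" using d e[of i k] h by simp
    qed (use d in simp_all)
  qed
  have loc: "M$$(i,k) = (\<Sum>j = 0..<m. P$$(i,j) * Q$$(j,k)) \<longleftrightarrow>
      ((M$$(i,k) = 1 \<longleftrightarrow> (\<exists>j<m. P$$(i,j)=1 \<and> Q$$(j,k)=1)) \<and>
     (\<forall>j<m. \<forall>j'<m. P$$(i,j)=1 \<and> Q$$(j,k)=1 \<and> P$$(i,j')=1 \<and> Q$$(j',k)=1 \<longrightarrow> j=j'))"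
    if "i < n" "k < p" for i k
  proof -
    have t: "\<And>j. j < m \<Longrightarrow> (P$$(i,j) * Q$$(j,k) = 1) = (P$$(i,j) = 1 \<and> Q$$(j,k) = 1)"
    proof -
      fix j assume "j < m"
      then have "P$$(i,j) = 0 \<or> P$$(i,j) = 1" "Q$$(j,k) = 0 \<or> Q$$(j,k) = 1"
        using P01 Q01 that by auto
      then show "(P$$(i,j) * Q$$(j,k) = 1) = (P$$(i,j) = 1 \<and> Q$$(j,k) = 1)" by auto
    qed
    have 1: "\<forall>j<m. P$$(i,j) * Q$$(j,k) = 0 \<or> P$$(i,j) * Q$$(j,k) = 1"
    proof (intro allI impI)
      fix j assume "j < m"
      then have "P$$(i,j) = 0 \<or> P$$(i,j) = 1" "Q$$(j,k) = 0 \<or> Q$$(j,k) = 1"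
        using P01 Q01 that by auto
      then show "P$$(i,j) * Q$$(j,k) = 0 \<or> P$$(i,j) * Q$$(j,k) = 1" by auto
    qed
    have a: "(\<exists>j<m. P$$(i,j) * Q$$(j,k) = 1) = (\<exists>j<m. P$$(i,j)=1 \<and> Q$$(j,k)=1)"
      using t by blast
    have b: "(\<forall>j<m. \<forall>j'<m. P$$(i,j) * Q$$(j,k) = 1 \<and> P$$(i,j') * Q$$(j',k) = 1 \<longrightarrow> j = j') =
       (\<forall>j<m. \<forall>j'<m. P$$(i,j)=1 \<and> Q$$(j,k)=1 \<and> P$$(i,j')=1 \<and> Q$$(j',k)=1 \<longrightarrow> j=j')"
      using t by blast
    show ?thesis using sum01[OF 1 M01[OF that]] unfolding a b .
  qed
  show ?thesis unfolding eq using loc by blast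
qed

locale three = e1: elem A B \<phi>1 + e2: elem B C \<phi>2 + e3: elem A C \<phi>3
  for A B C \<phi>1 \<phi>2 \<phi>3
begin
lemmas inA = e1.in_range and inB = e2.in_range and inC = e3.in_rangeB
end

locale comp = three +
  assumes H: "\<And>x. x \<in> shift_space A \<Longrightarrow> \<phi>2 (\<phi>1 x) = \<phi>3 x"
begin

lemma H2: "u \<in> shift_space B \<Longrightarrow> \<phi>2 u = \<phi>3 (e1.psi u)"
  by (metis H e1.phi_psi e1.psi_in)
lemma H3: "x \<in> shift_space A \<Longrightarrow> \<phi>1 x = e2.psi (\<phi>3 x)"
  by (metis H e1.phi_in e2.psi_phi)
lemma H4: "u \<in> shift_space B \<Longrightarrow> e1.psi u = e3.psi (\<phi>2 u)"
  by (metis H2 e1.psi_in e3.psi_phi)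

lemma trip1:
  assumes "a < dim_row A" "b < dim_row B" "c < dim_row C"
  shows "R_mat A B \<phi>1 $$ (a,b) = 1 \<and> R_mat B C \<phi>2 $$ (b,c) = 1 \<longleftrightarrow>
    (\<exists>x\<in>shift_space A. x 0 = a \<and> \<phi>1 x 0 = b \<and> \<phi>3 x 0 = c)"
proof
  assume "R_mat A B \<phi>1 $$ (a,b) = 1 \<and> R_mat B C \<phi>2 $$ (b,c) = 1"
  then obtain x y where x: "x \<in> shift_space A" "x 0 = a" "\<phi>1 x 0 = b"
    and y: "y \<in> shift_space B" "y 0 = b" "\<phi>2 y 0 = c"
    using e1.R_iff[OF assms(1,2), of 0] e2.R_iff[OF assms(2,3), of 0] by blast
  let ?u = "glue 0 (\<phi>1 x) y"
  have u: "?u \<in> shift_space B" using glue_in[OF e1.phi_in[OF x(1)] y(1)] x y by simp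
  let ?v = "e1.psi ?u"
  have v: "?v \<in> shift_space A" using e1.psi_in[OF u] .
  have "?v 0 = e1.psi (\<phi>1 x) 0" using e1.psi_local[OF u e1.phi_in[OF x(1)], of "-1"] by simp
  then have 1: "?v 0 = a" using e1.psi_phi[OF x(1)] x by simp
  have 2: "\<phi>1 ?v 0 = b" using e1.phi_psi[OF u] x by simp
  have "\<phi>3 ?v 0 = \<phi>2 ?u 0" using H[OF v] e1.phi_psi[OF u] by simp
  also have "\<dots> = \<phi>2 y 0" using e2.phi_local[OF u y(1), of 0] x y by simp
  finally have 3: "\<phi>3 ?v 0 = c" using y by simp
  show "\<exists>x\<in>shift_space A. x 0 = a \<and> \<phi>1 x 0 = b \<and> \<phi>3 x 0 = c" using v 1 2 3 by blast
next
  assume "\<exists>x\<in>shift_space A. x 0 = a \<and> \<phi>1 x 0 = b \<and> \<phi>3 x 0 = c"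
  then obtain x where x: "x \<in> shift_space A" "x 0 = a" "\<phi>1 x 0 = b" "\<phi>3 x 0 = c" by blast
  show "R_mat A B \<phi>1 $$ (a,b) = 1 \<and> R_mat B C \<phi>2 $$ (b,c) = 1"
  proof
    show "R_mat A B \<phi>1 $$ (a,b) = 1" using e1.R_iff[OF assms(1,2), of 0] x by blast
    have "\<phi>1 x \<in> shift_space B" "\<phi>1 x 0 = b" "\<phi>2 (\<phi>1 x) 0 = c"
      using x e1.phi_in[OF x(1)] H[OF x(1)] by auto
    then show "R_mat B C \<phi>2 $$ (b,c) = 1" using e2.R_iff[OF assms(2,3), of 0] by blast
  qed
qed

lemma part1: "R_mat A B \<phi>1 * R_mat B C \<phi>2 = R_mat A C \<phi>3"
proof (rule iffD2[OF mult_char[OF e1.R_dims e2.R_dims e3.R_dims e1.R_01' e2.R_01' e3.R_01']], intro allI impI conjI)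
  fix a c assume ac: "a < dim_row A" "c < dim_row C"
  show "R_mat A C \<phi>3 $$ (a,c) = 1 \<longleftrightarrow> (\<exists>b<dim_row B. R_mat A B \<phi>1 $$ (a,b) = 1 \<and> R_mat B C \<phi>2 $$ (b,c) = 1)"
  proof
    assume "R_mat A C \<phi>3 $$ (a,c) = 1"
    then obtain x where x: "x \<in> shift_space A" "x 0 = a" "\<phi>3 x 0 = c"
      using e3.R_iff[OF ac, of 0] by blast
    have b: "\<phi>1 x 0 < dim_row B" using inB[OF e1.phi_in[OF x(1)]] .
    show "\<exists>b<dim_row B. R_mat A B \<phi>1 $$ (a,b) = 1 \<and> R_mat B C \<phi>2 $$ (b,c) = 1"
      using trip1[OF ac(1) b ac(2)] x b by blast
  next
    assume "\<exists>b<dim_row B. R_mat A B \<phi>1 $$ (a,b) = 1 \<and> R_mat B C \<phi>2 $$ (b,c) = 1"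
    then obtain b x where "b < dim_row B" and x: "x \<in> shift_space A" "x 0 = a" "\<phi>3 x 0 = c"
      using trip1[OF ac(1) _ ac(2)] by blast
    then show "R_mat A C \<phi>3 $$ (a,c) = 1" using e3.R_iff[OF ac, of 0] by blast
  qed
  show "b1 = b2" if bb: "b1 < dim_row B" "b2 < dim_row B"
      and h: "R_mat A B \<phi>1 $$ (a,b1) = 1 \<and> R_mat B C \<phi>2 $$ (b1,c) = 1 \<and>
     R_mat A B \<phi>1 $$ (a,b2) = 1 \<and> R_mat B C \<phi>2 $$ (b2,c) = 1" for b1 b2
  proof -
    obtain x1 where x1: "x1 \<in> shift_space A" "x1 0 = a" "\<phi>1 x1 0 = b1" "\<phi>3 x1 0 = c"
      using trip1[OF ac(1) bb(1) ac(2)] h by blast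
    obtain x2 where x2: "x2 \<in> shift_space A" "x2 0 = a" "\<phi>1 x2 0 = b2" "\<phi>3 x2 0 = c"
      using trip1[OF ac(1) bb(2) ac(2)] h by blast
    let ?v = "glue 0 x1 x2"
    have v: "?v \<in> shift_space A" using glue_in[OF x1(1) x2(1)] x1 x2 by simp
    have "\<phi>1 ?v 0 = \<phi>1 x2 0" using e1.phi_local[OF v x2(1), of 0] x1 x2 by simp
    then have 1: "\<phi>1 ?v 0 = b2" using x2 by simp
    have p3v: "\<phi>3 ?v \<in> shift_space C" using e3.phi_in[OF v] .
    have a1: "\<phi>3 ?v (-1) = \<phi>3 x1 (-1)" using e3.phi_local[OF v x1(1), of "-1"] x1 x2 by simp
    have a2: "\<phi>3 ?v 0 = \<phi>3 x1 0" using e3.phi_local[OF v x2(1), of 0] x1 x2 by simp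
    have "\<phi>1 ?v 0 = e2.psi (\<phi>3 ?v) 0" using H3[OF v] by simp
    also have "\<dots> = e2.psi (\<phi>3 x1) 0"
      using e2.psi_local[OF p3v e3.phi_in[OF x1(1)], of "-1"] a1 a2 by simp
    also have "\<dots> = b1" using H3[OF x1(1)] x1 by simp
    finally show "b1 = b2" using 1 by simp
  qed
qed


lemma trip2:
  assumes "a < dim_row A" "b < dim_row B" "c < dim_row C"
  shows "R_mat B C \<phi>2 $$ (b,c) = 1 \<and> S_mat A C \<phi>3 $$ (c,a) = 1 \<longleftrightarrow>
    (\<exists>x\<in>shift_space A. \<phi>1 x 0 = b \<and> \<phi>3 x 0 = c \<and> x 1 = a)"
proof
  assume h: "R_mat B C \<phi>2 $$ (b,c) = 1 \<and> S_mat A C \<phi>3 $$ (c,a) = 1"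
  obtain y where y: "y \<in> shift_space B" "y 0 = b" "\<phi>2 y 0 = c"
    using e2.R_iff[OF assms(2,3), of 0] h by blast
  obtain x where x: "x \<in> shift_space A" "\<phi>3 x 0 = c" "x 1 = a"
    using e3.S_iff[OF assms(1,3), of 0] h by auto
  let ?w = "glue 0 (\<phi>2 y) (\<phi>3 x)"
  have w: "?w \<in> shift_space C" using glue_in[OF e2.phi_in[OF y(1)] e3.phi_in[OF x(1)]] x y by simp
  let ?v = "e3.psi ?w"
  have v: "?v \<in> shift_space A" using e3.psi_in[OF w] .
  have "?v 1 = e3.psi (\<phi>3 x) 1"
    using e3.psi_local[OF w e3.phi_in[OF x(1)], of 0] x y by simp
  then have 1: "?v 1 = a" using e3.psi_phi[OF x(1)] x by simp
  have 2: "\<phi>3 ?v 0 = c" using e3.phi_psi[OF w] y by simp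
  have "\<phi>1 ?v 0 = e2.psi (\<phi>3 ?v) 0" using H3[OF v] by simp
  also have "\<dots> = e2.psi ?w 0" using e3.phi_psi[OF w] by simp
  also have "\<dots> = e2.psi (\<phi>2 y) 0"
    using e2.psi_local[OF w e2.phi_in[OF y(1)], of "-1"] by simp
  also have "\<dots> = b" using e2.psi_phi[OF y(1)] y by simp
  finally have 3: "\<phi>1 ?v 0 = b" .
  show "\<exists>x\<in>shift_space A. \<phi>1 x 0 = b \<and> \<phi>3 x 0 = c \<and> x 1 = a" using v 1 2 3 by blast
next
  assume "\<exists>x\<in>shift_space A. \<phi>1 x 0 = b \<and> \<phi>3 x 0 = c \<and> x 1 = a"
  then obtain x where x: "x \<in> shift_space A" "\<phi>1 x 0 = b" "\<phi>3 x 0 = c" "x 1 = a" by blast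
  show "R_mat B C \<phi>2 $$ (b,c) = 1 \<and> S_mat A C \<phi>3 $$ (c,a) = 1"
  proof
    have "\<phi>1 x \<in> shift_space B" "\<phi>1 x 0 = b" "\<phi>2 (\<phi>1 x) 0 = c"
      using x e1.phi_in[OF x(1)] H[OF x(1)] by auto
    then show "R_mat B C \<phi>2 $$ (b,c) = 1" using e2.R_iff[OF assms(2,3), of 0] by blast
    show "S_mat A C \<phi>3 $$ (c,a) = 1" using e3.S_iff[OF assms(1,3), of 0] x by auto
  qed
qed

lemma part2: "R_mat B C \<phi>2 * S_mat A C \<phi>3 = S_mat A B \<phi>1"
proof (rule iffD2[OF mult_char[OF e2.R_dims e3.S_dims e1.S_dims e2.R_01' e3.S_01' e1.S_01']], intro allI impI conjI)
  fix b a assume ba: "b < dim_row B" "a < dim_row A"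
  show "S_mat A B \<phi>1 $$ (b,a) = 1 \<longleftrightarrow> (\<exists>c<dim_row C. R_mat B C \<phi>2 $$ (b,c) = 1 \<and> S_mat A C \<phi>3 $$ (c,a) = 1)"
  proof
    assume "S_mat A B \<phi>1 $$ (b,a) = 1"
    then obtain x where x: "x \<in> shift_space A" "\<phi>1 x 0 = b" "x 1 = a"
      using e1.S_iff[OF ba(2) ba(1), of 0] by auto
    have c: "\<phi>3 x 0 < dim_row C" using inC[OF e3.phi_in[OF x(1)]] .
    show "\<exists>c<dim_row C. R_mat B C \<phi>2 $$ (b,c) = 1 \<and> S_mat A C \<phi>3 $$ (c,a) = 1"
      using trip2[OF ba(2) ba(1) c] x c by blast
  next
    assume "\<exists>c<dim_row C. R_mat B C \<phi>2 $$ (b,c) = 1 \<and> S_mat A C \<phi>3 $$ (c,a) = 1"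
    then obtain c x where "c < dim_row C" and x: "x \<in> shift_space A" "\<phi>1 x 0 = b" "x 1 = a"
      using trip2[OF ba(2) ba(1)] by blast
    then show "S_mat A B \<phi>1 $$ (b,a) = 1" using e1.S_iff[OF ba(2) ba(1), of 0] by auto
  qed
  show "c1 = c2" if cc: "c1 < dim_row C" "c2 < dim_row C"
      and h: "R_mat B C \<phi>2 $$ (b,c1) = 1 \<and> S_mat A C \<phi>3 $$ (c1,a) = 1 \<and>
     R_mat B C \<phi>2 $$ (b,c2) = 1 \<and> S_mat A C \<phi>3 $$ (c2,a) = 1" for c1 c2
  proof -
    obtain x1 where x1: "x1 \<in> shift_space A" "\<phi>1 x1 0 = b" "\<phi>3 x1 0 = c1" "x1 1 = a"
      using trip2[OF ba(2) ba(1) cc(1)] h by blast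
    obtain x2 where x2: "x2 \<in> shift_space A" "\<phi>1 x2 0 = b" "\<phi>3 x2 0 = c2" "x2 1 = a"
      using trip2[OF ba(2) ba(1) cc(2)] h by blast
    have y1: "\<phi>1 x1 \<in> shift_space B" using e1.phi_in[OF x1(1)] .
    have y2: "\<phi>1 x2 \<in> shift_space B" using e1.phi_in[OF x2(1)] .
    let ?u = "glue 0 (\<phi>1 x1) (\<phi>1 x2)"
    have u: "?u \<in> shift_space B" using glue_in[OF y1 y2] x1 x2 by simp
    have "\<phi>2 ?u 0 = \<phi>2 (\<phi>1 x2) 0" using e2.phi_local[OF u y2, of 0] x1 x2 by simp
    also have "\<dots> = c2" using H[OF x2(1)] x2 by simp
    finally have 1: "\<phi>2 ?u 0 = c2" .
    have p0: "e1.psi ?u 0 = x1 0"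
      using e1.psi_local[OF u y1, of "-1"] e1.psi_phi[OF x1(1)] by simp
    have p1: "e1.psi ?u 1 = x1 1"
      using e1.psi_local[OF u y2, of 0] e1.psi_phi[OF x2(1)] x1 x2 by simp
    have "\<phi>2 ?u 0 = \<phi>3 (e1.psi ?u) 0" using H2[OF u] by simp
    also have "\<dots> = \<phi>3 x1 0" using e3.phi_local[OF e1.psi_in[OF u] x1(1), of 0] p0 p1 by simp
    finally show "c1 = c2" using 1 x1 by simp
  qed
qed

lemma trip3:
  assumes "a < dim_row A" "b < dim_row B" "c < dim_row C"
  shows "S_mat A C \<phi>3 $$ (c,a) = 1 \<and> R_mat A B \<phi>1 $$ (a,b) = 1 \<longleftrightarrow>
    (\<exists>x\<in>shift_space A. \<phi>3 x 0 = c \<and> x 1 = a \<and> \<phi>1 x 1 = b)"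
proof
  assume h: "S_mat A C \<phi>3 $$ (c,a) = 1 \<and> R_mat A B \<phi>1 $$ (a,b) = 1"
  obtain x where x: "x \<in> shift_space A" "\<phi>3 x 0 = c" "x 1 = a"
    using e3.S_iff[OF assms(1,3), of 0] h by auto
  obtain x' where x': "x' \<in> shift_space A" "x' 1 = a" "\<phi>1 x' 1 = b"
    using e1.R_iff[OF assms(1,2), of 1] h by auto
  let ?v = "glue 1 x x'"
  have v: "?v \<in> shift_space A" using glue_in[OF x(1) x'(1)] x x' by simp
  have 1: "\<phi>3 ?v 0 = c" using e3.phi_local[OF v x(1), of 0] x by simp
  have 2: "?v 1 = a" using x by simp
  have 3: "\<phi>1 ?v 1 = b" using e1.phi_local[OF v x'(1), of 1] x x' by simp
  show "\<exists>x\<in>shift_space A. \<phi>3 x 0 = c \<and> x 1 = a \<and> \<phi>1 x 1 = b" using v 1 2 3 by blast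
next
  assume "\<exists>x\<in>shift_space A. \<phi>3 x 0 = c \<and> x 1 = a \<and> \<phi>1 x 1 = b"
  then obtain x where x: "x \<in> shift_space A" "\<phi>3 x 0 = c" "x 1 = a" "\<phi>1 x 1 = b" by blast
  show "S_mat A C \<phi>3 $$ (c,a) = 1 \<and> R_mat A B \<phi>1 $$ (a,b) = 1"
  proof
    show "S_mat A C \<phi>3 $$ (c,a) = 1" using e3.S_iff[OF assms(1,3), of 0] x by auto
    show "R_mat A B \<phi>1 $$ (a,b) = 1" using e1.R_iff[OF assms(1,2), of 1] x by auto
  qed
qed

lemma part3: "S_mat A C \<phi>3 * R_mat A B \<phi>1 = S_mat B C \<phi>2"
proof (rule iffD2[OF mult_char[OF e3.S_dims e1.R_dims e2.S_dims e3.S_01' e1.R_01' e2.S_01']], intro allI impI conjI)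
  fix c b assume cb: "c < dim_row C" "b < dim_row B"
  show "S_mat B C \<phi>2 $$ (c,b) = 1 \<longleftrightarrow> (\<exists>a<dim_row A. S_mat A C \<phi>3 $$ (c,a) = 1 \<and> R_mat A B \<phi>1 $$ (a,b) = 1)"
  proof
    assume "S_mat B C \<phi>2 $$ (c,b) = 1"
    then obtain y where y: "y \<in> shift_space B" "\<phi>2 y 0 = c" "y 1 = b"
      using e2.S_iff[OF cb(2) cb(1), of 0] by auto
    let ?x = "e1.psi y"
    have x: "?x \<in> shift_space A" using e1.psi_in[OF y(1)] .
    have a: "?x 1 < dim_row A" using inA[OF x] .
    have "\<phi>3 ?x 0 = c" using H[OF x] e1.phi_psi[OF y(1)] y by simp
    moreover have "\<phi>1 ?x 1 = b" using e1.phi_psi[OF y(1)] y by simp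
    ultimately show "\<exists>a<dim_row A. S_mat A C \<phi>3 $$ (c,a) = 1 \<and> R_mat A B \<phi>1 $$ (a,b) = 1"
      using trip3[OF a cb(2) cb(1)] x a by blast
  next
    assume "\<exists>a<dim_row A. S_mat A C \<phi>3 $$ (c,a) = 1 \<and> R_mat A B \<phi>1 $$ (a,b) = 1"
    then obtain a x where "a < dim_row A" and x: "x \<in> shift_space A" "\<phi>3 x 0 = c" "\<phi>1 x 1 = b"
      using trip3[OF _ cb(2) cb(1)] by blast
    have "\<phi>1 x \<in> shift_space B" "\<phi>2 (\<phi>1 x) 0 = c" "\<phi>1 x (0+1) = b"
      using e1.phi_in[OF x(1)] H[OF x(1)] x by auto
    then show "S_mat B C \<phi>2 $$ (c,b) = 1" using e2.S_iff[OF cb(2) cb(1), of 0] by blast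
  qed
  show "a1 = a2" if aa: "a1 < dim_row A" "a2 < dim_row A"
      and h: "S_mat A C \<phi>3 $$ (c,a1) = 1 \<and> R_mat A B \<phi>1 $$ (a1,b) = 1 \<and>
     S_mat A C \<phi>3 $$ (c,a2) = 1 \<and> R_mat A B \<phi>1 $$ (a2,b) = 1" for a1 a2
  proof -
    obtain x1 where x1: "x1 \<in> shift_space A" "\<phi>3 x1 0 = c" "x1 1 = a1" "\<phi>1 x1 1 = b"
      using trip3[OF aa(1) cb(2) cb(1)] h by blast
    obtain x2 where x2: "x2 \<in> shift_space A" "\<phi>3 x2 0 = c" "x2 1 = a2" "\<phi>1 x2 1 = b"
      using trip3[OF aa(2) cb(2) cb(1)] h by blast
    have y1: "\<phi>1 x1 \<in> shift_space B" using e1.phi_in[OF x1(1)] .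
    have y2: "\<phi>1 x2 \<in> shift_space B" using e1.phi_in[OF x2(1)] .
    let ?u = "glue 1 (\<phi>1 x1) (\<phi>1 x2)"
    have u: "?u \<in> shift_space B" using glue_in[OF y1 y2] x1 x2 by simp
    have "e1.psi ?u 1 = e1.psi (\<phi>1 x1) 1" using e1.psi_local[OF u y1, of 0] by simp
    then have 1: "e1.psi ?u 1 = a1" using e1.psi_phi[OF x1(1)] x1 by simp
    have q0: "\<phi>2 ?u 0 = \<phi>2 (\<phi>1 x2) 0"
    proof -
      have "\<phi>2 ?u 0 = \<phi>2 (\<phi>1 x1) 0" using e2.phi_local[OF u y1, of 0] by simp
      also have "\<dots> = c" using H[OF x1(1)] x1 by simp
      also have "\<dots> = \<phi>2 (\<phi>1 x2) 0" using H[OF x2(1)] x2 by simp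
      finally show ?thesis .
    qed
    have q1: "\<phi>2 ?u 1 = \<phi>2 (\<phi>1 x2) 1" using e2.phi_local[OF u y2, of 1] x1 x2 by simp
    have "e1.psi ?u 1 = e3.psi (\<phi>2 ?u) 1" using H4[OF u] by simp
    also have "\<dots> = e3.psi (\<phi>2 (\<phi>1 x2)) 1"
      using e3.psi_local[OF e2.phi_in[OF u] e2.phi_in[OF y2], of 0] q0 q1 by simp
    also have "\<dots> = e1.psi (\<phi>1 x2) 1" using H4[OF y2] by simp
    also have "\<dots> = a2" using e1.psi_phi[OF x2(1)] x2 by simp
    finally show "a1 = a2" using 1 by simp
  qed
qed

end

context three
begin

lemma conv:
  assumes M1: "R_mat A B \<phi>1 * R_mat B C \<phi>2 = R_mat A C \<phi>3"
    and M2: "R_mat B C \<phi>2 * S_mat A C \<phi>3 = S_mat A B \<phi>1"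
    and M3: "S_mat A C \<phi>3 * R_mat A B \<phi>1 = S_mat B C \<phi>2"
    and x: "x \<in> shift_space A"
  shows "\<phi>2 (\<phi>1 x) = \<phi>3 x"
proof
  fix i
  note c1 = iffD1[OF mult_char[OF e1.R_dims e2.R_dims e3.R_dims e1.R_01' e2.R_01' e3.R_01'] M1]
  note c2 = iffD1[OF mult_char[OF e2.R_dims e3.S_dims e1.S_dims e2.R_01' e3.S_01' e1.S_01'] M2]
  note c3 = iffD1[OF mult_char[OF e3.S_dims e1.R_dims e2.S_dims e3.S_01' e1.R_01' e2.S_01'] M3]
  define y where "y = \<phi>1 x"
  define z where "z = \<phi>3 x"
  have y: "y \<in> shift_space B" unfolding y_def using e1.phi_in[OF x] .
  have z: "z \<in> shift_space C" unfolding z_def using e3.phi_in[OF x] .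
  define a where "a = x i"
  define a' where "a' = x (i+1)"
  define b where "b = y i"
  define b' where "b' = y (i+1)"
  define c where "c = z i"
  have ra: "a < dim_row A" "a' < dim_row A" unfolding a_def a'_def using inA[OF x] by auto
  have rb: "b < dim_row B" "b' < dim_row B" unfolding b_def b'_def using inB[OF y] by auto
  have rc: "c < dim_row C" unfolding c_def using inC[OF z] by auto
  have R1: "R_mat A B \<phi>1 $$ (a,b) = 1"
    using e1.R_iff[OF ra(1) rb(1), of i] x unfolding a_def b_def y_def by blast
  have S1: "S_mat A B \<phi>1 $$ (b,a') = 1"
    using e1.S_iff[OF ra(2) rb(1), of i] x unfolding a'_def b_def y_def by blast
  have S3: "S_mat A C \<phi>3 $$ (c,a') = 1"
    using e3.S_iff[OF ra(2) rc, of i] x unfolding a'_def c_def z_def by blast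
  have R1': "R_mat A B \<phi>1 $$ (a',b') = 1"
    using e1.R_iff[OF ra(2) rb(2), of "i+1"] x unfolding a'_def b'_def y_def by blast
  have S2: "S_mat B C \<phi>2 $$ (c,b') = 1"
    using c3 rc rb(2) ra(2) S3 R1' by blast
  obtain c' where c': "c' < dim_row C" "R_mat B C \<phi>2 $$ (b,c') = 1" "S_mat A C \<phi>3 $$ (c',a') = 1"
    using c2 rb(1) ra(2) S1 by blast
  have R3': "R_mat A C \<phi>3 $$ (a,c') = 1"
    using c1 ra(1) c'(1) R1 c'(2) rb(1) by blast
  obtain x1 where x1: "x1 \<in> shift_space A" "x1 i = a" "\<phi>3 x1 i = c'"
    using e3.R_iff[OF ra(1) c'(1), of i] R3' by blast
  obtain x2 where x2: "x2 \<in> shift_space A" "\<phi>3 x2 i = c'" "x2 (i+1) = a'"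
    using e3.S_iff[OF ra(2) c'(1), of i] c'(3) by blast
  obtain v where v: "v \<in> shift_space A" "v i = a" "v (i+1) = a'" "\<phi>3 v i = c'"
    using e3.Z[OF x1(1) x1(3) x1(2) x2(1) x2(2) x2(3)] by blast
  have "c' = c" using e3.phi_local[OF v(1) x, of i] v unfolding c_def z_def a_def a'_def by simp
  then have R2: "R_mat B C \<phi>2 $$ (b,c) = 1" using c'(2) by simp
  obtain y1 where y1: "y1 \<in> shift_space B" "y1 i = b" "\<phi>2 y1 i = c"
    using e2.R_iff[OF rb(1) rc, of i] R2 by blast
  obtain y2 where y2: "y2 \<in> shift_space B" "\<phi>2 y2 i = c" "y2 (i+1) = b'"
    using e2.S_iff[OF rb(2) rc, of i] S2 by blast
  obtain w where w: "w \<in> shift_space B" "w i = b" "w (i+1) = b'" "\<phi>2 w i = c"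
    using e2.Z[OF y1(1) y1(3) y1(2) y2(1) y2(2) y2(3)] by blast
  have "\<phi>2 y i = c" using e2.phi_local[OF y w(1), of i] w unfolding b_def b'_def by simp
  then show "\<phi>2 (\<phi>1 x) i = \<phi>3 x i" unfolding c_def z_def y_def .
qed

end

theorem mainTheorem11:
  fixes A B C :: "int mat"
    and \<phi>1 \<phi>2 \<phi>3 :: "(int \<Rightarrow> nat) \<Rightarrow> (int \<Rightarrow> nat)"
  assumes "square_01_nondeg A" "square_01_nondeg B" "square_01_nondeg C"
    and "elementary_conjugacy A B \<phi>1"
    and "elementary_conjugacy B C \<phi>2"
    and "elementary_conjugacy A C \<phi>3"
  shows "(\<forall>x\<in>shift_space A. \<phi>2 (\<phi>1 x) = \<phi>3 x) \<longleftrightarrow>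
         (R_mat A B \<phi>1 * R_mat B C \<phi>2 = R_mat A C \<phi>3 \<and>
          R_mat B C \<phi>2 * S_mat A C \<phi>3 = S_mat A B \<phi>1 \<and>
          S_mat A C \<phi>3 * R_mat A B \<phi>1 = S_mat B C \<phi>2)"
proof -
  have t: "three A B C \<phi>1 \<phi>2 \<phi>3"
    by (intro three.intro elem.intro) (use assms in auto)
  show ?thesis
  proof
    assume h: "\<forall>x\<in>shift_space A. \<phi>2 (\<phi>1 x) = \<phi>3 x"
    have c: "comp A B C \<phi>1 \<phi>2 \<phi>3"
      by (rule comp.intro[OF t], rule comp_axioms.intro) (use h in blast)
    show "R_mat A B \<phi>1 * R_mat B C \<phi>2 = R_mat A C \<phi>3 \<and>
          R_mat B C \<phi>2 * S_mat A C \<phi>3 = S_mat A B \<phi>1 \<and>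
          S_mat A C \<phi>3 * R_mat A B \<phi>1 = S_mat B C \<phi>2"
      using comp.part1[OF c] comp.part2[OF c] comp.part3[OF c] by blast
  next
    assume "R_mat A B \<phi>1 * R_mat B C \<phi>2 = R_mat A C \<phi>3 \<and>
          R_mat B C \<phi>2 * S_mat A C \<phi>3 = S_mat A B \<phi>1 \<and>
          S_mat A C \<phi>3 * R_mat A B \<phi>1 = S_mat B C \<phi>2"
    then show "\<forall>x\<in>shift_space A. \<phi>2 (\<phi>1 x) = \<phi>3 x"
      using three.conv[OF t] by blast
  qed
qed


end
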